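(* Consider a synchronous round-based message-passing system of $n$ processes $p_1,\dots,p_n$ with reliable point-to-point channels between every pair of processes, with authentication (unforgeable signatures), in which up to $t$ processes, for any $0 \le t < n$, may be Byzantine. Then the two-round algorithm $\mathcal{A}_1$ described in the context solves $k$-set agreement for $k = \lfloor \frac{n}{n-t} \rfloor + 1$.
   Context: Model: in each round every process sends messages which are received in that same round. Every process $p_i$ has a private signing key and knows all public keys; signatures of correct processes cannot be forged, so a faulty process cannot produce or alter a value signed by a correct process; messages whose signatures are invalid are ignored (treated as not received). A Byzantine process may deviate arbitrarily from the protocol; a correct process never fails. $k$-set agreement (here decisions are allowed in $V \cup \{\bot\}$, where $\bot$ counts as a decided value): each process proposes an initial value from a set $V$; (Validity) if all correct processes propose the same value $v$, no correct process decides a value different from $v$; (Agreement) at most $k$ distinct values are decided by correct processes; (Termination) every correct process eventually decides. Algorithm $\mathcal{A}_1$, code of $p_i$ with input $v_i$: $p_i$ keeps an $n\times n$ matrix $M_i$ with all entries initially $\bot$, and sets $M_i[i][i] := v_i$. Round 1: $p_i$ sends $v_i$, signed by $p_i$, to all processes; when it receives a validly signed value $v_j$ from $p_j$ it sets $M_i[i][j] := v_j$. Round 2: $p_i$ sends its row $M_i[i][\ast]$ (each non-$\bot$ entry $M_i[i][j]$ carrying $p_j$'s signature) to all processes; when it receives such a vector from $p_j$ it stores it as $M_i[j][\ast]$ (entries without a valid signature of their originator being treated as $\bot$). At the end of round 2, $p_i$ builds a vector $V_i$ with $V_i[i] = v_i$ and, for each $j \ne i$: letting $w = M_i[i][j]$,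 if $w = \bot$ then $V_i[j] = \bot$; otherwise $V_i[j] = w$, except that $V_i[j] := \bot$ if there is $\ell \ne i$ with $M_i[\ell][j] \ne \bot$ and $M_i[\ell][j] \ne w$. Finally, if at least $n-t$ entries of $V_i$ are equal to $v_i$, $p_i$ decides $v_i$; otherwise it decides $\bot$. *)

theory Defs
  imports Main
begin

(* Processes are p_0,...,p_{n-1} (indices i < n).  F is the set of Byzantine
   processes; correct processes are those i < n with i \<notin> F.
   Option values model V \<union> {\<bottom>}: None = \<bottom>.

   v i            : input of p_i.
   r1 i j         : validly-signed value p_i receives from p_j in round 1
                    (None = nothing received / invalid signature).
   r2 i j l       : entry l of the row vector p_i receives from p_j in round 2,
                    after discarding entries lacking a valid signature of p_l. *)

text \<open>Row M_j[j][*] of process p_j at the end of round 1.\<close>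
definition own_row :: "(nat \<Rightarrow> 'v) \<Rightarrow> (nat \<Rightarrow> nat \<Rightarrow> 'v option) \<Rightarrow> nat \<Rightarrow> nat \<Rightarrow> 'v option" where
  "own_row v r1 j l = (if l = j then Some (v j) else r1 j l)"

text \<open>Admissible executions: reliable synchronous channels between correct
processes; a Byzantine process may send anything signed by itself (or by
other Byzantine processes), but cannot forge signatures of correct processes;
a correct process p_l signs only its input v l.\<close>
definition admissible ::
  "nat \<Rightarrow> nat set \<Rightarrow> (nat \<Rightarrow> 'v) \<Rightarrow> (nat \<Rightarrow> nat \<Rightarrow> 'v option) \<Rightarrow> (nat \<Rightarrow> nat \<Rightarrow> nat \<Rightarrow> 'v option) \<Rightarrow> bool" where
  "admissible n F v r1 r2 \<longleftrightarrow>
     (\<forall>i j. i < n \<and> i \<notin> F \<and> j < n \<and> j \<notin> F \<longrightarrow> r1 i j = Some (v j)) \<and>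
     (\<forall>i j l. i < n \<and> i \<notin> F \<and> j < n \<and> j \<notin> F \<and> l < n \<longrightarrow> r2 i j l = own_row v r1 j l) \<and>
     (\<forall>i j l. i < n \<and> i \<notin> F \<and> j < n \<and> j \<in> F \<and> l < n \<and> l \<notin> F \<longrightarrow>
         r2 i j l = None \<or> r2 i j l = Some (v l))"

text \<open>The vector V_i built by p_i at the end of round 2 (M_i[i][j] = r1 i j for
j \<noteq> i, and M_i[l][j] = r2 i l j for l \<noteq> i).\<close>
definition vecV ::
  "nat \<Rightarrow> (nat \<Rightarrow> 'v) \<Rightarrow> (nat \<Rightarrow> nat \<Rightarrow> 'v option) \<Rightarrow> (nat \<Rightarrow> nat \<Rightarrow> nat \<Rightarrow> 'v option) \<Rightarrow> nat \<Rightarrow> nat \<Rightarrow> 'v option" where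
  "vecV n v r1 r2 i j =
     (if j = i then Some (v i)
      else (case r1 i j of
              None \<Rightarrow> None
            | Some w \<Rightarrow> (if \<exists>l<n. l \<noteq> i \<and> r2 i l j \<noteq> None \<and> r2 i l j \<noteq> Some w
                         then None else Some w)))"

definition decideA1 ::
  "nat \<Rightarrow> nat \<Rightarrow> (nat \<Rightarrow> 'v) \<Rightarrow> (nat \<Rightarrow> nat \<Rightarrow> 'v option) \<Rightarrow> (nat \<Rightarrow> nat \<Rightarrow> nat \<Rightarrow> 'v option) \<Rightarrow> nat \<Rightarrow> 'v option" where
  "decideA1 n t v r1 r2 i =
     (if card {j. j < n \<and> vecV n v r1 r2 i j = Some (v i)} \<ge> n - t then Some (v i) else None)"

text \<open>k-set agreement (decisions in V \<union> {\<bottom>}) for the correct processes.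
Termination holds trivially since every correct process decides at the end of
round 2 (dec is a total function).\<close>
definition k_set_agreement ::
  "nat \<Rightarrow> nat set \<Rightarrow> nat \<Rightarrow> (nat \<Rightarrow> 'v) \<Rightarrow> (nat \<Rightarrow> 'v option) \<Rightarrow> bool" where
  "k_set_agreement n F k v dec \<longleftrightarrow>
     (\<forall>w. (\<forall>i<n. i \<notin> F \<longrightarrow> v i = w) \<longrightarrow> (\<forall>i<n. i \<notin> F \<longrightarrow> dec i = Some w)) \<and>
     card (dec ` {i. i < n \<and> i \<notin> F}) \<le> k"

end

theory Submission
  imports Defs
begin

lemma disj_lemma:
  assumes adm: "admissible n F v r1 r2"
    and i: "i < n" "i \<notin> F" and i': "i' < n" "i' \<notin> F"
    and ne: "v i \<noteq> v i'"
    and j: "vecV n v r1 r2 i j = Some (v i)" "vecV n v r1 r2 i' j = Some (v i')" "j < n"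
  shows False
proof -
  have A1: "\<And>a b. a < n \<Longrightarrow> a \<notin> F \<Longrightarrow> b < n \<Longrightarrow> b \<notin> F \<Longrightarrow> r1 a b = Some (v b)"
    using adm unfolding admissible_def by blast
  have A2: "\<And>a b l. a < n \<Longrightarrow> a \<notin> F \<Longrightarrow> b < n \<Longrightarrow> b \<notin> F \<Longrightarrow> l < n \<Longrightarrow> r2 a b l = own_row v r1 b l"
    using adm unfolding admissible_def by blast
  have ii: "i \<noteq> i'" using ne by auto
  show False
  proof (cases "j = i")
    case True
    then have "r1 i' i = Some (v i')" using j(2) ii
      by (auto simp: vecV_def split: option.splits if_splits)
    with A1[OF i' i] ne show False by simp
  next
    case ji: False
    show False
    proof (cases "j = i'")
      case True
      then have "r1 i i' = Some (v i)" using j(1) ji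
        by (auto simp: vecV_def split: option.splits if_splits)
      with A1[OF i i'] ne show False by simp
    next
      case ji': False
      have r1i: "r1 i j = Some (v i)" using j(1) ji
        by (auto simp: vecV_def split: option.splits if_splits)
      have r1i': "r1 i' j = Some (v i')" using j(2) ji'
        by (auto simp: vecV_def split: option.splits if_splits)
      show False
      proof (cases "j \<in> F")
        case False
        with A1[OF i j(3)] A1[OF i' j(3)] r1i r1i' ne show False by simp
      next
        case True
        have "r2 i i' j = Some (v i')" using A2[OF i i' j(3)] ji' r1i' by (simp add: own_row_def)
        then have "\<exists>l<n. l \<noteq> i \<and> r2 i l j \<noteq> None \<and> r2 i l j \<noteq> Some (v i)"
          using i' ii ne by auto
        then have "vecV n v r1 r2 i j = None" using ji r1i by (simp add: vecV_def)
        with j(1) show False by simp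
      qed
    qed
  qed
qed

theorem theorem2:
  fixes n t :: nat and F :: "nat set" and v :: "nat \<Rightarrow> 'v"
    and r1 :: "nat \<Rightarrow> nat \<Rightarrow> 'v option" and r2 :: "nat \<Rightarrow> nat \<Rightarrow> nat \<Rightarrow> 'v option"
  assumes "t < n"
    and "F \<subseteq> {..<n}" and "card F \<le> t"
    and adm: "admissible n F v r1 r2"
  shows "k_set_agreement n F (n div (n - t) + 1) v (decideA1 n t v r1 r2)"
proof -
  define C where "C = {i. i < n \<and> i \<notin> F}"
  define S where "S i = {j. j < n \<and> vecV n v r1 r2 i j = Some (v i)}" for i
  define dec where "dec = decideA1 n t v r1 r2"
  have A1: "\<And>a b. a < n \<Longrightarrow> a \<notin> F \<Longrightarrow> b < n \<Longrightarrow> b \<notin> F \<Longrightarrow> r1 a b = Some (v b)"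
    using adm unfolding admissible_def by blast
  have A2: "\<And>a b l. a < n \<Longrightarrow> a \<notin> F \<Longrightarrow> b < n \<Longrightarrow> b \<notin> F \<Longrightarrow> l < n \<Longrightarrow> r2 a b l = own_row v r1 b l"
    using adm unfolding admissible_def by blast
  have A3: "\<And>a b l. a < n \<Longrightarrow> a \<notin> F \<Longrightarrow> b < n \<Longrightarrow> b \<in> F \<Longrightarrow> l < n \<Longrightarrow> l \<notin> F \<Longrightarrow>
         r2 a b l = None \<or> r2 a b l = Some (v l)"
    using adm unfolding admissible_def by blast
  have cardC: "card C \<ge> n - t"
  proof -
    have "C = {..<n} - F" by (auto simp: C_def)
    then have "card C = n - card F" using assms(2) by (simp add: card_Diff_subset finite_subset)
    then show ?thesis using assms(3) by simp
  qed
  have valid: "\<forall>w. (\<forall>i<n. i \<notin> F \<longrightarrow> v i = w) \<longrightarrow> (\<forall>i<n. i \<notin> F \<longrightarrow> dec i = Some w)"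
  proof (intro allI impI)
    fix w i assume all: "\<forall>i<n. i \<notin> F \<longrightarrow> v i = w" and i: "i < n" "i \<notin> F"
    have "C \<subseteq> S i"
    proof
      fix j assume "j \<in> C"
      then have j: "j < n" "j \<notin> F" by (auto simp: C_def)
      have "vecV n v r1 r2 i j = Some (v i)"
      proof (cases "j = i")
        case True then show ?thesis by (simp add: vecV_def)
      next
        case False
        have r: "r1 i j = Some w" using A1[OF i j] all j by simp
        have "\<not> (\<exists>l<n. l \<noteq> i \<and> r2 i l j \<noteq> None \<and> r2 i l j \<noteq> Some w)"
        proof
          assume "\<exists>l<n. l \<noteq> i \<and> r2 i l j \<noteq> None \<and> r2 i l j \<noteq> Some w"
          then obtain l where l: "l < n" "r2 i l j \<noteq> None" "r2 i l j \<noteq> Some w" by blast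
          show False
          proof (cases "l \<in> F")
            case True
            then show False using A3[OF i l(1) True j] l all j by auto
          next
            case False
            then show False using A2[OF i l(1) False j(1)] A1[OF l(1) False j] l all j
              by (auto simp: own_row_def split: if_splits)
          qed
        qed
        then show ?thesis using False r all i by (simp add: vecV_def)
      qed
      then show "j \<in> S i" using j by (simp add: S_def)
    qed
    moreover have "finite (S i)" by (simp add: S_def)
    ultimately have "card (S i) \<ge> n - t" using cardC by (meson card_mono dual_order.trans)
    then show "dec i = Some w" using all i by (simp add: dec_def decideA1_def S_def)
  qed
  define W where "W = {v i | i. i \<in> C \<and> dec i = Some (v i)}"
  have finW: "finite W" unfolding W_def C_def by (rule finite_subset[of _ "v ` {..<n}"]) auto
  have sub: "dec ` C \<subseteq> insert None (Some ` W)"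
    by (auto simp: W_def dec_def decideA1_def)
  have "card (dec ` C) \<le> card (insert None (Some ` W))"
    using sub finW by (intro card_mono) auto
  also have "\<dots> \<le> card W + 1"
    using finW by (metis Suc_eq_plus1 card_image_le card_insert_if finite_imageI le_SucI Suc_le_mono)
  finally have c1: "card (dec ` C) \<le> card W + 1" .
  define g where "g w = (SOME i. i \<in> C \<and> dec i = Some (v i) \<and> v i = w)" for w
  have g: "g w \<in> C \<and> dec (g w) = Some (v (g w)) \<and> v (g w) = w" if "w \<in> W" for w
    unfolding g_def by (rule someI_ex) (use that W_def in auto)
  have Sg: "card (S (g w)) \<ge> n - t" if "w \<in> W" for w
    using g[OF that] by (auto simp: dec_def decideA1_def S_def split: if_splits)
  have disj: "S (g w) \<inter> S (g w') = {}" if "w \<in> W" "w' \<in> W" "w \<noteq> w'" for w w'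
  proof (rule ccontr)
    assume "S (g w) \<inter> S (g w') \<noteq> {}"
    then obtain j where "j \<in> S (g w)" "j \<in> S (g w')" by blast
    then show False using disj_lemma[OF adm, of "g w" "g w'" j] g[OF that(1)] g[OF that(2)] that(3)
      by (auto simp: S_def C_def)
  qed
  have "card W * (n - t) \<le> (\<Sum>w\<in>W. card (S (g w)))"
    using Sg sum_mono[of W "\<lambda>_. n - t" "\<lambda>w. card (S (g w))"] by simp
  also have "\<dots> = card (\<Union>w\<in>W. S (g w))"
    using finW disj by (subst card_UN_disjoint) (auto simp: S_def)
  also have "\<dots> \<le> n"
  proof -
    have "(\<Union>w\<in>W. S (g w)) \<subseteq> {..<n}" by (auto simp: S_def)
    then show ?thesis by (metis card_lessThan card_mono finite_lessThan)
  qed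
  finally have "card W * (n - t) \<le> n" .
  then have "card W \<le> n div (n - t)" using assms(1) by (simp add: less_eq_div_iff_mult_less_eq)
  with c1 have "card (dec ` C) \<le> n div (n - t) + 1" by simp
  with valid show ?thesis unfolding k_set_agreement_def dec_def C_def by simp
qed

end
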